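(* Let $\kappa \geq 2$ be an integer. If there exists a finite projective plane of order $\kappa$, then there exists a complete set of $\kappa - 1$ mutually projective Latin squares of order $\kappa$.
   Context: A geometry is a pair $(\mathcal{P},\mathcal{L})$ of disjoint sets, the elements of $\mathcal{L}$ (lines) being subsets of $\mathcal{P}$ (points), such that every two distinct points lie in exactly one common line and every line contains at least two points. A finite projective plane is a finite geometry in which any two different lines intersect and which contains at least four points no three of which lie on a common line. In a finite projective plane all lines have the same number $k$ of points; the order of the plane is $\kappa = k - 1$. A Latin square of order $\kappa$ is a $\kappa\times\kappa$ matrix with entries from $\{1,\dots,\kappa\}$ in which each symbol occurs exactly once in each row and each column. Two Latin squares $L_1=[l^{(1)}_{ij}]$ and $L_2=[l^{(2)}_{ij}]$ of order $\kappa$ are called projective if both have all diagonal entries equal to $1$ and, for every row index $r$ and every row index $s$, there is exactly one column index $c$ with $l^{(1)}_{rc} = l^{(2)}_{sc}$. A family of Latin squares of order $\kappa$ is a set of mutually projective Latin squares (MPLS) if its members are pairwise projective; such a set is complete if it contains $\kappa - 1$ Latin squares. *)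

theory Defs
  imports Main
begin

definition geometry :: "'a set \<Rightarrow> 'a set set \<Rightarrow> bool" where
  "geometry P L \<longleftrightarrow>
     (\<forall>l\<in>L. l \<subseteq> P \<and> (\<exists>a b. a \<noteq> b \<and> a \<in> l \<and> b \<in> l)) \<and>
     (\<forall>p\<in>P. \<forall>q\<in>P. p \<noteq> q \<longrightarrow> (\<exists>!l. l \<in> L \<and> p \<in> l \<and> q \<in> l))"

definition finite_projective_plane :: "'a set \<Rightarrow> 'a set set \<Rightarrow> bool" where
  "finite_projective_plane P L \<longleftrightarrow>
     geometry P L \<and> finite P \<and> finite L \<and>
     (\<forall>l\<in>L. \<forall>m\<in>L. l \<noteq> m \<longrightarrow> l \<inter> m \<noteq> {}) \<and>
     (\<exists>Q. Q \<subseteq> P \<and> card Q = 4 \<and> (\<forall>l\<in>L. card (Q \<inter> l) \<le> 2))"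

definition plane_order :: "'a set \<Rightarrow> 'a set set \<Rightarrow> nat \<Rightarrow> bool" where
  "plane_order P L \<kappa> \<longleftrightarrow> (\<forall>l\<in>L. card l = \<kappa> + 1)"

text \<open>A Latin square of order \<kappa> is a function on index pairs in {1..\<kappa>}\<times>{1..\<kappa>}
  with values in {1..\<kappa>}; by convention it is 0 outside the index range, so that
  equal squares are equal functions.\<close>
definition latin_square :: "nat \<Rightarrow> (nat \<Rightarrow> nat \<Rightarrow> nat) \<Rightarrow> bool" where
  "latin_square \<kappa> M \<longleftrightarrow>
     (\<forall>i j. (i \<notin> {1..\<kappa>} \<or> j \<notin> {1..\<kappa>}) \<longrightarrow> M i j = 0) \<and>
     (\<forall>i\<in>{1..\<kappa>}. \<forall>j\<in>{1..\<kappa>}. M i j \<in> {1..\<kappa>}) \<and>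
     (\<forall>i\<in>{1..\<kappa>}. \<forall>s\<in>{1..\<kappa>}. \<exists>!j. j \<in> {1..\<kappa>} \<and> M i j = s) \<and>
     (\<forall>j\<in>{1..\<kappa>}. \<forall>s\<in>{1..\<kappa>}. \<exists>!i. i \<in> {1..\<kappa>} \<and> M i j = s)"

definition projective_pair :: "nat \<Rightarrow> (nat \<Rightarrow> nat \<Rightarrow> nat) \<Rightarrow> (nat \<Rightarrow> nat \<Rightarrow> nat) \<Rightarrow> bool" where
  "projective_pair \<kappa> M1 M2 \<longleftrightarrow>
     (\<forall>i\<in>{1..\<kappa>}. M1 i i = 1) \<and> (\<forall>i\<in>{1..\<kappa>}. M2 i i = 1) \<and>
     (\<forall>r\<in>{1..\<kappa>}. \<forall>s\<in>{1..\<kappa>}. \<exists>!c. c \<in> {1..\<kappa>} \<and> M1 r c = M2 s c)"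

definition MPLS :: "nat \<Rightarrow> (nat \<Rightarrow> nat \<Rightarrow> nat) set \<Rightarrow> bool" where
  "MPLS \<kappa> S \<longleftrightarrow>
     (\<forall>M\<in>S. latin_square \<kappa> M) \<and>
     (\<forall>M1\<in>S. \<forall>M2\<in>S. M1 \<noteq> M2 \<longrightarrow> projective_pair \<kappa> M1 M2)"

definition complete_MPLS :: "nat \<Rightarrow> (nat \<Rightarrow> nat \<Rightarrow> nat) set \<Rightarrow> bool" where
  "complete_MPLS \<kappa> S \<longleftrightarrow> MPLS \<kappa> S \<and> finite S \<and> card S = \<kappa> - 1"

end

theory Submission
  imports Defs "HOL-Combinatorics.Transposition"
begin

locale coords =
  fixes \<kappa> :: nat and X :: "'a set" and Li :: "'a set" and f :: "'a \<Rightarrow> 'a \<Rightarrow> nat" and V H :: 'a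
  assumes k2: "\<kappa> \<ge> 2" and finl: "finite Li" and cardl: "card Li = \<kappa>+1"
    and VH: "V \<in> Li" "H \<in> Li" "V \<noteq> H"
    and frange: "\<And>E p. E \<in> Li \<Longrightarrow> p \<in> X \<Longrightarrow> f E p \<in> {1..\<kappa>}"
    and pair: "\<And>E F i j. E \<in> Li \<Longrightarrow> F \<in> Li \<Longrightarrow> E \<noteq> F \<Longrightarrow> i \<in> {1..\<kappa>} \<Longrightarrow> j \<in> {1..\<kappa>}
               \<Longrightarrow> \<exists>!p. p \<in> X \<and> f E p = i \<and> f F p = j"
    and diag: "\<And>i. i \<in> {1..\<kappa>} \<Longrightarrow> \<exists>p\<in>X. f V p = i \<and> f H p = 1 \<and> (\<forall>D\<in>Li-{V,H}. f D p = i)"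
begin

definition pt where "pt E F i j = (THE p. p \<in> X \<and> f E p = i \<and> f F p = j)"

lemma pt: assumes "E \<in> Li" "F \<in> Li" "E \<noteq> F" "i \<in> {1..\<kappa>}" "j \<in> {1..\<kappa>}"
  shows "pt E F i j \<in> X" "f E (pt E F i j) = i" "f F (pt E F i j) = j"
  using theI'[OF pair[OF assms]] unfolding pt_def by auto

lemma pt_eq: assumes "E \<in> Li" "F \<in> Li" "E \<noteq> F" "p \<in> X" "f E p = i" "f F p = j"
  shows "pt E F i j = p"
proof -
  have "i \<in> {1..\<kappa>}" "j \<in> {1..\<kappa>}" using frange assms by blast+
  then show ?thesis unfolding pt_def using the1_equality[OF pair[OF assms(1-3)]] assms by blast
qed

definition sq where "sq D i j = (if i \<in> {1..\<kappa>} \<and> j \<in> {1..\<kappa>} then f H (pt D V i j) else 0)"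

lemma latin: assumes D: "D \<in> Li-{V,H}" shows "latin_square \<kappa> (sq D)"
proof -
  have DV: "D \<in> Li" "D \<noteq> V" "D \<noteq> H" using D by auto
  note VH' = VH
  have row: "\<exists>!j. j \<in> {1..\<kappa>} \<and> sq D i j = s" if i: "i \<in> {1..\<kappa>}" and s: "s \<in> {1..\<kappa>}" for i s
  proof -
    define p where "p = pt D H i s"
    have p: "p \<in> X" "f D p = i" "f H p = s" using pt[OF DV(1) VH(2) DV(3) i s] p_def by auto
    define j where "j = f V p"
    have j: "j \<in> {1..\<kappa>}" using frange VH p j_def by auto
    have "pt D V i j = p" using pt_eq[OF DV(1) VH(1) DV(2) p(1) p(2)] j_def by auto
    then have "sq D i j = s" using i j p unfolding sq_def by auto
    moreover have "j' = j" if "j' \<in> {1..\<kappa>}" "sq D i j' = s" for j'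
    proof -
      define q where "q = pt D V i j'"
      have q: "q \<in> X" "f D q = i" "f V q = j'" using pt[OF DV(1) VH(1) DV(2) i that(1)] q_def by auto
      have "f H q = s" using that i unfolding sq_def q_def by auto
      then have "pt D H i s = q" using pt_eq[OF DV(1) VH(2) DV(3) q(1) q(2)] by auto
      then show ?thesis using q p_def j_def by auto
    qed
    ultimately show ?thesis using j by blast
  qed
  have col: "\<exists>!i. i \<in> {1..\<kappa>} \<and> sq D i j = s" if j: "j \<in> {1..\<kappa>}" and s: "s \<in> {1..\<kappa>}" for j s
  proof -
    define p where "p = pt V H j s"
    have p: "p \<in> X" "f V p = j" "f H p = s" using pt[OF VH j s] p_def by auto
    define i where "i = f D p"
    have i: "i \<in> {1..\<kappa>}" using frange DV p i_def by auto
    have "pt D V i j = p" using pt_eq[OF DV(1) VH(1) DV(2) p(1)] p i_def by auto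
    then have "sq D i j = s" using i j p unfolding sq_def by auto
    moreover have "i' = i" if "i' \<in> {1..\<kappa>}" "sq D i' j = s" for i'
    proof -
      define q where "q = pt D V i' j"
      have q: "q \<in> X" "f D q = i'" "f V q = j" using pt[OF DV(1) VH(1) DV(2) that(1) j] q_def by auto
      have "f H q = s" using that j unfolding sq_def q_def by auto
      then have "pt V H j s = q" using pt_eq[OF VH q(1) q(3)] by auto
      then show ?thesis using q p_def i_def by auto
    qed
    ultimately show ?thesis using i by blast
  qed
  have rng: "sq D i j \<in> {1..\<kappa>}" if "i \<in> {1..\<kappa>}" "j \<in> {1..\<kappa>}" for i j
    using that frange[OF VH(2) pt(1)[OF DV(1) VH(1) DV(2) that]] unfolding sq_def by auto
  show ?thesis unfolding latin_square_def using row col rng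
    by (auto simp: sq_def)
qed

lemma sqdiag: assumes D: "D \<in> Li-{V,H}" and i: "i \<in> {1..\<kappa>}" shows "sq D i i = 1"
proof -
  obtain p where p: "p \<in> X" "f V p = i" "f H p = 1" "\<forall>D\<in>Li-{V,H}. f D p = i" using diag[OF i] by blast
  have "pt D V i i = p" using pt_eq[of D V p i i] D p VH by auto
  then show ?thesis using i p unfolding sq_def by auto
qed

lemma proj: assumes D: "D \<in> Li-{V,H}" and D': "D' \<in> Li-{V,H}" and DD: "D \<noteq> D'"
  and r: "r \<in> {1..\<kappa>}" and s: "s \<in> {1..\<kappa>}"
  shows "\<exists>!c. c \<in> {1..\<kappa>} \<and> sq D r c = sq D' s c"
proof -
  have DV: "D \<in> Li" "D \<noteq> V" "D \<noteq> H" "D' \<in> Li" "D' \<noteq> V" "D' \<noteq> H" using D D' by auto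
  define p where "p = pt D D' r s"
  have p: "p \<in> X" "f D p = r" "f D' p = s" using pt[OF DV(1) DV(4) DD r s] p_def by auto
  define c where "c = f V p"
  have c: "c \<in> {1..\<kappa>}" using frange VH p c_def by auto
  have "pt D V r c = p" using pt_eq[OF DV(1) VH(1) DV(2) p(1) p(2)] c_def by auto
  moreover have "pt D' V s c = p" using pt_eq[OF DV(4) VH(1) DV(5) p(1) p(3)] c_def by auto
  ultimately have "sq D r c = sq D' s c" using r s c unfolding sq_def by auto
  moreover have "c' = c" if c': "c' \<in> {1..\<kappa>}" "sq D r c' = sq D' s c'" for c'
  proof -
    define q1 where "q1 = pt D V r c'"
    define q2 where "q2 = pt D' V s c'"
    have q1: "q1 \<in> X" "f D q1 = r" "f V q1 = c'" using pt[OF DV(1) VH(1) DV(2) r c'(1)] q1_def by auto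
    have q2: "q2 \<in> X" "f D' q2 = s" "f V q2 = c'" using pt[OF DV(4) VH(1) DV(5) s c'(1)] q2_def by auto
    have h: "f H q1 = f H q2" using c' r s unfolding sq_def q1_def q2_def by auto
    have "pt V H c' (f H q1) = q1" using pt_eq[OF VH q1(1) q1(3)] by auto
    moreover have "pt V H c' (f H q1) = q2" using pt_eq[OF VH q2(1) q2(3)] h by auto
    ultimately have "q1 = q2" by simp
    then have "pt D D' r s = q1" using pt_eq[OF DV(1) DV(4) DD q1(1) q1(2)] q2 by auto
    then show ?thesis using q1 p_def c_def by auto
  qed
  ultimately show ?thesis using c by blast
qed

lemma sq_inj: "inj_on sq (Li-{V,H})"
proof (rule inj_onI, rule ccontr)
  fix D D' assume D: "D \<in> Li-{V,H}" and D': "D' \<in> Li-{V,H}" and e: "sq D = sq D'" and ne: "D \<noteq> D'"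
  have 1: "1 \<in> {1..\<kappa>}" "2 \<in> {1..\<kappa>}" using k2 by auto
  from proj[OF D D' ne 1(1) 1(1)] have "\<exists>!c. c \<in> {1..\<kappa>} \<and> sq D 1 c = sq D' 1 c" .
  moreover have "sq D 1 1 = sq D' 1 1" "sq D 1 2 = sq D' 1 2" using e by auto
  ultimately show False using 1 by (metis numeral_One numeral_eq_iff semiring_norm(85)) 
qed

lemma result: "\<exists>S. complete_MPLS \<kappa> S"
proof -
  define S where "S = sq ` (Li-{V,H})"
  have "card S = card (Li-{V,H})" using sq_inj card_image S_def by blast
  also have "\<dots> = \<kappa> - 1" using cardl finl VH by (simp add: card_Diff_subset)
  finally have c: "card S = \<kappa> - 1" .
  have "MPLS \<kappa> S" unfolding MPLS_def S_def projective_pair_def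
    using latin sqdiag proj by blast
  then show ?thesis using c finl S_def unfolding complete_MPLS_def by blast
qed

end


locale plane =
  fixes P :: "'a set" and L :: "'a set set" and \<kappa> :: nat
  assumes fpp: "finite_projective_plane P L" and ord: "plane_order P L \<kappa>"
begin

lemma geo: "geometry P L" and finP: "finite P" and inter: "\<And>l m. l \<in> L \<Longrightarrow> m \<in> L \<Longrightarrow> l \<noteq> m \<Longrightarrow> l \<inter> m \<noteq> {}"
  using fpp unfolding finite_projective_plane_def by auto

lemma line_sub: "l \<in> L \<Longrightarrow> l \<subseteq> P" using geo unfolding geometry_def by auto

lemma cardline: "l \<in> L \<Longrightarrow> card l = \<kappa> + 1" using ord unfolding plane_order_def by auto

lemma ex1_line: "p \<in> P \<Longrightarrow> q \<in> P \<Longrightarrow> p \<noteq> q \<Longrightarrow> \<exists>!l. l \<in> L \<and> p \<in> l \<and> q \<in> l"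
  using geo unfolding geometry_def by auto

lemma lines_eq: assumes "l \<in> L" "m \<in> L" "p \<noteq> q" "p \<in> l" "q \<in> l" "p \<in> m" "q \<in> m" shows "l = m"
proof -
  have "p \<in> P" "q \<in> P" using assms line_sub by auto
  then show ?thesis using ex1_line[of p q] assms by blast
qed

definition join where "join p q = (THE l. l \<in> L \<and> p \<in> l \<and> q \<in> l)"

lemma join: assumes "p \<in> P" "q \<in> P" "p \<noteq> q" shows "join p q \<in> L" "p \<in> join p q" "q \<in> join p q"
  using theI'[OF ex1_line[OF assms]] unfolding join_def by auto

lemma join_eq: assumes "l \<in> L" "p \<in> l" "q \<in> l" "p \<noteq> q" shows "join p q = l"
proof -
  have "p \<in> P" "q \<in> P" using assms line_sub by auto
  note j = join[OF this assms(4)]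
  show ?thesis using lines_eq[OF j(1) assms(1) assms(4) j(2) j(3) assms(2,3)] .
qed

definition meet where "meet l m = (THE p. p \<in> l \<and> p \<in> m)"

lemma meet: assumes "l \<in> L" "m \<in> L" "l \<noteq> m" shows "meet l m \<in> l" "meet l m \<in> m"
proof -
  obtain p where p: "p \<in> l" "p \<in> m" using inter[OF assms] by blast
  have "\<exists>!p. p \<in> l \<and> p \<in> m"
  proof (rule ex1I[of _ p])
    show "p \<in> l \<and> p \<in> m" using p by simp
    fix q assume q: "q \<in> l \<and> q \<in> m"
    show "q = p" proof (rule ccontr)
      assume "q \<noteq> p" then have "l = m" using lines_eq[OF assms(1,2), of q p] q p by blast
      then show False using assms(3) by simp
    qed
  qed
  from theI'[OF this] show "meet l m \<in> l" "meet l m \<in> m" unfolding meet_def by auto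
qed

lemma meet_eq: assumes "l \<in> L" "m \<in> L" "l \<noteq> m" "p \<in> l" "p \<in> m" shows "meet l m = p"
proof (rule ccontr)
  assume "meet l m \<noteq> p"
  then show False using meet[OF assms(1-3)] lines_eq[OF assms(1,2), of "meet l m" p] assms by blast
qed

lemma card_diff: assumes "l \<in> L" "m \<in> L" "l \<noteq> m" shows "card (m - l) = \<kappa>"
proof -
  have "m \<inter> l = {meet l m}"
  proof
    show "m \<inter> l \<subseteq> {meet l m}" using meet_eq[OF assms] by blast
    show "{meet l m} \<subseteq> m \<inter> l" using meet[OF assms] by blast
  qed
  moreover have "finite m" using line_sub[OF assms(2)] finP finite_subset by blast
  moreover have "m - l = m - {meet l m}" using \<open>m \<inter> l = _\<close> by blast
  ultimately have "card (m - l) = card m - 1" using meet(2)[OF assms] by simp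
  then show ?thesis using cardline[OF assms(2)] by simp
qed


lemma same_pt: assumes "l \<in> L" "m \<in> L" "l \<noteq> m" "x \<in> l" "x \<in> m" "y \<in> l" "y \<in> m" shows "x = y"
  using lines_eq[OF assms(1,2), of x y] assms by blast

lemma coord:
  assumes Li: "Li \<in> L" and E: "E \<in> Li" and m: "m \<in> L" "m \<noteq> Li" "E \<notin> m"
    and g: "bij_betw g {1..\<kappa>} (m - Li)" and p: "p \<in> P" "p \<notin> Li"
  shows "inv_into {1..\<kappa>} g (meet (join E p) m) \<in> {1..\<kappa>}"
    and "i \<in> {1..\<kappa>} \<Longrightarrow> inv_into {1..\<kappa>} g (meet (join E p) m) = i \<longleftrightarrow> p \<in> join E (g i)"
proof -
  have EP: "E \<in> P" using E line_sub Li by blast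
  have pE: "p \<noteq> E" using p E by blast
  note lp = join[OF EP p(1) pE[symmetric]]
  have lpm: "join E p \<noteq> m" using lp m by blast
  have lpL: "join E p \<noteq> Li" using lp p by blast
  define z where "z = meet (join E p) m"
  have z: "z \<in> join E p" "z \<in> m" using meet[OF lp(1) m(1) lpm] z_def by auto
  have zL: "z \<notin> Li"
  proof
    assume "z \<in> Li"
    then have "z = E" using same_pt[OF lp(1) Li lpL] z(1) lp(2) E by blast
    then show False using z(2) m(3) by simp
  qed
  have zimg: "z \<in> g ` {1..\<kappa>}" using g z zL unfolding bij_betw_def by auto
  show "inv_into {1..\<kappa>} g (meet (join E p) m) \<in> {1..\<kappa>}"
    using inv_into_into[OF zimg] z_def by simp
  assume i: "i \<in> {1..\<kappa>}"
  have gi: "g i \<in> m" "g i \<notin> Li" using g i unfolding bij_betw_def by auto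
  have giP: "g i \<in> P" using gi m line_sub by blast
  have giE: "g i \<noteq> E" using gi E by blast
  show "inv_into {1..\<kappa>} g (meet (join E p) m) = i \<longleftrightarrow> p \<in> join E (g i)"
  proof
    assume "inv_into {1..\<kappa>} g (meet (join E p) m) = i"
    then have "g i = z" using f_inv_into_f[OF zimg] z_def by simp
    then have "join E (g i) = join E p" using join_eq[OF lp(1) lp(2) z(1)] giE by simp
    then show "p \<in> join E (g i)" using lp by simp
  next
    assume pg: "p \<in> join E (g i)"
    note lg = join[OF EP giP giE[symmetric]]
    have "join E p = join E (g i)" using join_eq[OF lg(1) lg(2) pg pE[symmetric]] .
    then have "meet (join E p) m = g i" using meet_eq[OF lp(1) m(1) lpm] lg gi by simp
    then show "inv_into {1..\<kappa>} g (meet (join E p) m) = i"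
      using bij_betw_inv_into_left[OF g i] by simp
  qed
qed

lemma pair_pt:
  assumes Li: "Li \<in> L" and EF: "E \<in> Li" "F \<in> Li" "E \<noteq> F"
    and a: "a \<in> P" "a \<notin> Li" and b: "b \<in> P" "b \<notin> Li"
  shows "\<exists>!p. p \<in> P - Li \<and> p \<in> join E a \<and> p \<in> join F b"
proof -
  have EP: "E \<in> P" "F \<in> P" using EF line_sub Li by blast+
  have aE: "a \<noteq> E" "b \<noteq> F" using a b EF by blast+
  note l1 = join[OF EP(1) a(1) aE(1)[symmetric]]
  note l2 = join[OF EP(2) b(1) aE(2)[symmetric]]
  have l1L: "join E a \<noteq> Li" using l1 a by blast
  have l2L: "join F b \<noteq> Li" using l2 b by blast
  have l12: "join E a \<noteq> join F b"
  proof
    assume "join E a = join F b"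
    then have "join E a = Li" using lines_eq[OF l1(1) Li EF(3), of ] l1 l2 EF by simp
    then show False using l1L by simp
  qed
  define p where "p = meet (join E a) (join F b)"
  have p: "p \<in> join E a" "p \<in> join F b" using meet[OF l1(1) l2(1) l12] p_def by auto
  have pP: "p \<in> P" using p l1 line_sub by blast
  have pL: "p \<notin> Li"
  proof
    assume "p \<in> Li"
    then have "p = E" "p = F" using same_pt[OF l1(1) Li l1L] same_pt[OF l2(1) Li l2L] p l1 l2 EF by blast+
    then show False using EF by simp
  qed
  show ?thesis
  proof (rule ex1I[of _ p])
    show "p \<in> P - Li \<and> p \<in> join E a \<and> p \<in> join F b" using p pP pL by blast
    fix q assume q: "q \<in> P - Li \<and> q \<in> join E a \<and> q \<in> join F b"
    show "q = p" using same_pt[OF l1(1) l2(1) l12] q p by blast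
  qed
qed


lemma two_elems: assumes "finite A" "card A \<ge> 2" obtains a b where "a \<in> A" "b \<in> A" "a \<noteq> b"
proof -
  obtain a where a: "a \<in> A" using assms by fastforce
  have "card (A - {a}) \<ge> 1" using assms a by simp
  then have "A - {a} \<noteq> {}" by (metis card.empty not_one_le_zero)
  then obtain b where "b \<in> A - {a}" by blast
  then show ?thesis using that a by blast
qed

lemma bij_fix1: assumes "finite A" "card A = n" "x \<in> A"
  obtains g where "bij_betw g {1..n} A" "g 1 = x"
proof -
  obtain h where h: "bij_betw h {1..n} A" using ex_bij_betw_nat_finite_1[OF assms(1)] assms(2) by blast
  define k where "k = inv_into {1..n} h x"
  have xi: "x \<in> h ` {1..n}" using h assms(3) unfolding bij_betw_def by auto
  have k: "k \<in> {1..n}" "h k = x" using inv_into_into[OF xi] f_inv_into_f[OF xi] k_def by auto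
  have n1: "1 \<in> {1..n}" using k by auto
  have "bij_betw (Fun.swap 1 k h) {1..n} A" using bij_betw_swap_iff[OF n1 k(1), of h A] h by blast
  moreover have "Fun.swap 1 k h 1 = x" using k by (simp add: Fun.swap_def)
  ultimately show ?thesis using that by blast
qed

lemma exists_coords: assumes k2: "\<kappa> \<ge> 2" shows "\<exists>X Li (f::'a \<Rightarrow> 'a \<Rightarrow> nat) V H. coords \<kappa> X Li f V H"
proof -
  obtain Q where Q: "Q \<subseteq> P" "card Q = 4" "\<forall>l\<in>L. card (Q \<inter> l) \<le> 2"
    using fpp unfolding finite_projective_plane_def by blast
  have finQ: "finite Q" using Q(1) finP finite_subset by blast
  obtain a b where ab: "a \<in> Q" "b \<in> Q" "a \<noteq> b" using two_elems[OF finQ] Q(2) by auto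
  define Li where "Li = join a b"
  have abP: "a \<in> P" "b \<in> P" using ab Q(1) by auto
  have Li: "Li \<in> L" using join(1)[OF abP ab(3)] Li_def by simp
  have finL: "finite Li" using finite_subset[OF line_sub[OF Li] finP] .
  have cL: "card Li = \<kappa> + 1" using cardline[OF Li] .
  obtain V H where VH: "V \<in> Li" "H \<in> Li" "V \<noteq> H" using two_elems[OF finL] cL k2 by auto
  have VHP: "V \<in> P" "H \<in> P" using VH line_sub[OF Li] by auto
  have "\<not> Q \<subseteq> Li"
  proof
    assume "Q \<subseteq> Li" then have "Q \<inter> Li = Q" by blast
    then show False using Q(2) Q(3) Li by fastforce
  qed
  then obtain p0 where p0: "p0 \<in> P" "p0 \<notin> Li" using Q(1) by blast
  define h0 where "h0 = join H p0"
  have Hp0: "H \<noteq> p0" using p0 VH by blast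
  note h0 = join[OF VHP(2) p0(1) Hp0, folded h0_def]
  have h0L: "h0 \<noteq> Li" using h0 p0 by blast
  have Vh0: "V \<notin> h0" using same_pt[OF h0(1) Li h0L] h0 VH by blast
  have Eh0: "E \<notin> h0" if "E \<in> Li" "E \<noteq> H" for E using same_pt[OF h0(1) Li h0L] h0 VH that by blast
  have finh0: "finite (h0 - Li)" using finite_subset[OF line_sub[OF h0(1)] finP] by simp
  obtain xs where xs: "bij_betw xs {1..\<kappa>} (h0 - Li)"
    using ex_bij_betw_nat_finite_1[OF finh0] card_diff[OF Li h0(1) h0L[symmetric]] by auto
  have k1: "1 \<in> {1..\<kappa>}" using k2 by simp
  define x1 where "x1 = xs 1"
  have x1: "x1 \<in> h0" "x1 \<notin> Li" using xs k1 x1_def unfolding bij_betw_def by auto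
  have x1P: "x1 \<in> P" using x1 line_sub[OF h0(1)] by auto
  have Vx1: "V \<noteq> x1" using x1 VH by blast
  define c1 where "c1 = join V x1"
  note c1 = join[OF VHP(1) x1P Vx1, folded c1_def]
  have c1L: "c1 \<noteq> Li" using c1 x1 by blast
  have Hc1: "H \<notin> c1" using same_pt[OF c1(1) Li c1L] c1 VH by blast
  have finc1: "finite (c1 - Li)" using finite_subset[OF line_sub[OF c1(1)] finP] by simp
  obtain ys where ys: "bij_betw ys {1..\<kappa>} (c1 - Li)" "ys 1 = x1"
    using bij_fix1[OF finc1 card_diff[OF Li c1(1) c1L[symmetric]], of x1] c1 x1 by blast
  define G where "G E = (if E = H then ys else xs)" for E
  define M where "M E = (if E = H then c1 else h0)" for E
  define f where "f E p = inv_into {1..\<kappa>} (G E) (meet (join E p) (M E))" for E p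
  have GM: "M E \<in> L" "M E \<noteq> Li" "E \<notin> M E" "bij_betw (G E) {1..\<kappa>} (M E - Li)" if "E \<in> Li" for E
    using that c1 c1L Hc1 h0 h0L Eh0 xs ys unfolding G_def M_def by auto
  have fr: "f E p \<in> {1..\<kappa>}" and fi: "\<And>i. i \<in> {1..\<kappa>} \<Longrightarrow> f E p = i \<longleftrightarrow> p \<in> join E (G E i)"
    if "E \<in> Li" "p \<in> P - Li" for E p
    using coord[OF Li that(1) GM[OF that(1)], of p] that unfolding f_def by auto
  have Gi: "G E i \<in> P" "G E i \<notin> Li" if "E \<in> Li" "i \<in> {1..\<kappa>}" for E i
    using GM(4)[OF that(1)] line_sub[OF GM(1)[OF that(1)]] that(2) unfolding bij_betw_def by auto
  have "coords \<kappa> (P - Li) Li f V H"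
  proof
    show "2 \<le> \<kappa>" "finite Li" "card Li = \<kappa> + 1" "V \<in> Li" "H \<in> Li" "V \<noteq> H"
      using k2 finL cL VH by auto
    show "\<And>E p. E \<in> Li \<Longrightarrow> p \<in> P - Li \<Longrightarrow> f E p \<in> {1..\<kappa>}" using fr by blast
    fix E F i j assume EF: "E \<in> Li" "F \<in> Li" "E \<noteq> F" and ij: "i \<in> {1..\<kappa>}" "j \<in> {1..\<kappa>}"
    have e: "\<exists>!p. p \<in> P - Li \<and> p \<in> join E (G E i) \<and> p \<in> join F (G F j)"
      using pair_pt[OF Li EF Gi[OF EF(1) ij(1)] Gi[OF EF(2) ij(2)]] .
    have "(p \<in> P - Li \<and> f E p = i \<and> f F p = j) = (p \<in> P - Li \<and> p \<in> join E (G E i) \<and> p \<in> join F (G F j))" for p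
      using fi[OF EF(1), of p i] fi[OF EF(2), of p j] ij by blast
    then show "\<exists>!p. p \<in> P - Li \<and> f E p = i \<and> f F p = j" using e by simp
  next
    fix i assume i: "i \<in> {1..\<kappa>}"
    define p where "p = xs i"
    have p: "p \<in> h0" "p \<notin> Li" using xs i p_def unfolding bij_betw_def by auto
    have pP: "p \<in> P" using p line_sub[OF h0(1)] by auto
    have Gp: "p \<in> join E (G E i)" if "E \<in> Li" "E \<noteq> H" for E
    proof -
      have "G E i = p" using that p_def G_def by simp
      have "E \<in> P" using that line_sub[OF Li] by auto
      moreover have "E \<noteq> p" using that p by auto
      ultimately show ?thesis using join(3)[of E p] \<open>G E i = p\<close> pP by simp
    qed
    have "G H 1 = x1" using ys G_def by simp
    moreover have "join H x1 = h0" using join_eq[OF h0(1) h0(2) x1(1)] x1 VH by blast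
    ultimately have "p \<in> join H (G H 1)" using p by simp
    then have "f H p = 1" using fi[OF VH(2), of p 1] pP p k1 by blast
    moreover have "f V p = i" using fi[OF VH(1), of p i] Gp[OF VH(1) VH(3)] pP p i by blast
    moreover have "\<forall>D\<in>Li - {V, H}. f D p = i" using fi[of _ p i] Gp pP p i by blast
    ultimately show "\<exists>p\<in>P - Li. f V p = i \<and> f H p = 1 \<and> (\<forall>D\<in>Li - {V, H}. f D p = i)"
      using pP p by blast
  qed
  then show ?thesis by blast
qed

end

theorem mainTheorem1:
  fixes \<kappa> :: nat and P :: "'a set" and L :: "'a set set"
  assumes "\<kappa> \<ge> 2"
    and "finite_projective_plane P L"
    and "plane_order P L \<kappa>"
  shows "\<exists>S. complete_MPLS \<kappa> S"
proof -
  interpret plane P L \<kappa> using assms by unfold_locales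
  show ?thesis using exists_coords[OF assms(1)] coords.result by metis
qed

end
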